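(* Let $(A_k,b_k,c_k)_{k\in\mathbb{Z}}$ define the discrete-time system $x_{k+1}=A_kx_k+b_ku_k$, $y_k=c_kx_k$, with $A_k\in\mathbb{R}^{n\times n}$, $b_k\in\mathbb{R}^{n\times1}$, $c_k\in\mathbb{R}^{1\times n}$. The system is completely controllable if and only if it is algebraically equivalent to a system $(\tilde A_k,\tilde b_k,\tilde c_k)_{k\in\mathbb{Z}}$ in controller canonical form.
   Context: Complete controllability: for every $k\in\mathbb{Z}$ and every $\xi_s,\xi_f\in\mathbb{R}^n$ there are controls $u_k,\dots,u_{k+n-1}$ such that $x_k=\xi_s$ implies $x_{k+n}=\xi_f$. Two systems $(A_k,b_k,c_k)_{k\in\mathbb{Z}}$ and $(\tilde A_k,\tilde b_k,\tilde c_k)_{k\in\mathbb{Z}}$ are algebraically equivalent if there are invertible matrices $\{T_k\}_{k\in\mathbb{Z}}$ with $\tilde A_k=T_{k+1}A_kT_k^{-1}$, $\tilde b_k=T_{k+1}b_k$, $\tilde c_k=c_kT_k^{-1}$ for all $k$. A system is in controller canonical form if for every $k$, $b_k=(0,\dots,0,1)^T$ and $A_k$ has ones on the superdiagonal (entries $(i,i+1)$, $i=1,\dots,n-1$), zeros elsewhere in the first $n-1$ rows, and an arbitrary last row $(\alpha_{k,1},\dots,\alpha_{k,n})$. *)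

theory Defs
  imports "Jordan_Normal_Form.Matrix"
begin

definition is_system :: "nat \<Rightarrow> (int \<Rightarrow> real mat) \<Rightarrow> (int \<Rightarrow> real mat) \<Rightarrow> (int \<Rightarrow> real mat) \<Rightarrow> bool" where
  "is_system n A b c \<longleftrightarrow>
     (\<forall>k. A k \<in> carrier_mat n n \<and> b k \<in> carrier_mat n 1 \<and> c k \<in> carrier_mat 1 n)"

fun state :: "(int \<Rightarrow> real mat) \<Rightarrow> (int \<Rightarrow> real mat) \<Rightarrow> int \<Rightarrow> real vec \<Rightarrow> (int \<Rightarrow> real) \<Rightarrow> nat \<Rightarrow> real vec" where
  "state A b k xi u 0 = xi"
| "state A b k xi u (Suc j) =
     A (k + int j) *\<^sub>v state A b k xi u j + u (k + int j) \<cdot>\<^sub>v col (b (k + int j)) 0"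

definition completely_controllable :: "nat \<Rightarrow> (int \<Rightarrow> real mat) \<Rightarrow> (int \<Rightarrow> real mat) \<Rightarrow> bool" where
  "completely_controllable n A b \<longleftrightarrow>
     (\<forall>k. \<forall>xs \<in> carrier_vec n. \<forall>xf \<in> carrier_vec n.
        \<exists>u :: int \<Rightarrow> real. state A b k xs u n = xf)"

definition alg_equivalent ::
  "nat \<Rightarrow> (int \<Rightarrow> real mat) \<Rightarrow> (int \<Rightarrow> real mat) \<Rightarrow> (int \<Rightarrow> real mat) \<Rightarrow>
   (int \<Rightarrow> real mat) \<Rightarrow> (int \<Rightarrow> real mat) \<Rightarrow> (int \<Rightarrow> real mat) \<Rightarrow> bool" where
  "alg_equivalent n A b c A' b' c' \<longleftrightarrow>
     (\<exists>T Ti :: int \<Rightarrow> real mat. \<forall>k.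
        T k \<in> carrier_mat n n \<and> Ti k \<in> carrier_mat n n \<and>
        T k * Ti k = 1\<^sub>m n \<and> Ti k * T k = 1\<^sub>m n \<and>
        A' k = T (k + 1) * A k * Ti k \<and>
        b' k = T (k + 1) * b k \<and>
        c' k = c k * Ti k)"

text \<open>Controller canonical form (0-based indices): b k = (0,...,0,1)^T, and in the first
  n-1 rows of A k the only nonzero entries are ones on the superdiagonal; the last row is
  arbitrary.\<close>

definition controller_canonical :: "nat \<Rightarrow> (int \<Rightarrow> real mat) \<Rightarrow> (int \<Rightarrow> real mat) \<Rightarrow> bool" where
  "controller_canonical n A b \<longleftrightarrow>
     (\<forall>k. (\<forall>i<n. b k $$ (i, 0) = (if i = n - 1 then 1 else 0)) \<and>
          (\<forall>i<n - 1. \<forall>j<n. A k $$ (i, j) = (if j = i + 1 then 1 else 0)))"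

end

theory Submission
  imports Defs "Jordan_Normal_Form.Determinant"
begin

fun Phim :: "nat \<Rightarrow> (int \<Rightarrow> real mat) \<Rightarrow> int \<Rightarrow> nat \<Rightarrow> real mat" where
  "Phim n A k 0 = 1\<^sub>m n"
| "Phim n A k (Suc j) = A (k + int j) * Phim n A k j"

definition vsum :: "nat \<Rightarrow> nat \<Rightarrow> (nat \<Rightarrow> real vec) \<Rightarrow> real vec" where
  "vsum n j f = vec n (\<lambda>i. \<Sum>l<j. f l $ i)"

definition Vc :: "nat \<Rightarrow> (int \<Rightarrow> real mat) \<Rightarrow> (int \<Rightarrow> real mat) \<Rightarrow> int \<Rightarrow> nat \<Rightarrow> nat \<Rightarrow> real vec" where
  "Vc n A b k j l = Phim n A (k + int l + 1) (j - l - 1) *\<^sub>v col (b (k + int l)) 0"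

definition Rm :: "nat \<Rightarrow> (int \<Rightarrow> real mat) \<Rightarrow> (int \<Rightarrow> real mat) \<Rightarrow> int \<Rightarrow> real mat" where
  "Rm n A b k = mat n n (\<lambda>(i,l). Vc n A b k n l $ i)"

lemma Phim_carrier: "is_system n A b c \<Longrightarrow> Phim n A k j \<in> carrier_mat n n"
  by (induction j) (auto simp: is_system_def intro!: mult_carrier_mat)

lemma Phim_split: assumes "is_system n A b c"
  shows "Phim n A a (p + q) = Phim n A (a + int p) q * Phim n A a p"
proof (induction q)
  case 0
  then show ?case using Phim_carrier[OF assms] by (simp add: left_mult_one_mat[OF Phim_carrier[OF assms]])
next
  case (Suc q)
  have "Phim n A a (p + Suc q) = A (a + int (p+q)) * (Phim n A (a + int p) q * Phim n A a p)"
    using Suc by simp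
  also have "\<dots> = (A (a + int (p+q)) * Phim n A (a + int p) q) * Phim n A a p"
    using Phim_carrier[OF assms] assms unfolding is_system_def
    by (metis assoc_mult_mat)
  finally show ?case by (simp add: add.assoc)
qed

lemma Phim_Suc': assumes "is_system n A b c"
  shows "Phim n A k (Suc j) = Phim n A (k + 1) j * A k"
proof -
  have "Phim n A k (1 + j) = Phim n A (k + 1) j * Phim n A k 1"
    using Phim_split[OF assms, of k 1 j] by (metis of_nat_1)
  moreover have Ak: "A k \<in> carrier_mat n n" using assms unfolding is_system_def by simp
  moreover have "Phim n A k 1 = A k" using right_mult_one_mat[OF Ak] by simp
  ultimately show ?thesis by (metis plus_1_eq_Suc)
qed

lemma sys_dims[simp]: "is_system n A b c \<Longrightarrow> dim_row (A k) = n"  "is_system n A b c \<Longrightarrow> dim_col (A k) = n"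
  "is_system n A b c \<Longrightarrow> dim_row (b k) = n"  "is_system n A b c \<Longrightarrow> dim_col (b k) = 1"
  "is_system n A b c \<Longrightarrow> dim_row (c k) = 1"  "is_system n A b c \<Longrightarrow> dim_col (c k) = n"
  unfolding is_system_def by auto

lemma Phim_dims[simp]: "is_system n A b c \<Longrightarrow> dim_row (Phim n A k j) = n"  "is_system n A b c \<Longrightarrow> dim_col (Phim n A k j) = n"
  using Phim_carrier by (meson carrier_matD)+

lemma bc_carrier: "is_system n A b c \<Longrightarrow> col (b k) 0 \<in> carrier_vec n"
  unfolding is_system_def by (metis carrier_matD(1) carrier_vecI dim_col)

lemma bc_dim[simp]: "is_system n A b c \<Longrightarrow> dim_vec (col (b k) 0) = n"
  by simp

lemma Vc_carrier: "is_system n A b c \<Longrightarrow> Vc n A b k j l \<in> carrier_vec n"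
  unfolding Vc_def using Phim_carrier bc_carrier by (metis mult_mat_vec_carrier)

lemma Vc_dim[simp]: "is_system n A b c \<Longrightarrow> dim_vec (Vc n A b k j l) = n"
  using Vc_carrier by (meson carrier_vecD)

lemma vsum_carrier: "vsum n j f \<in> carrier_vec n"
  unfolding vsum_def by simp

lemma vsum_index: "i < n \<Longrightarrow> vsum n j f $ i = (\<Sum>l<j. f l $ i)"
  unfolding vsum_def by simp

lemma vsum_cong: "(\<And>l. l < j \<Longrightarrow> f l = g l) \<Longrightarrow> vsum n j f = vsum n j g"
  unfolding vsum_def by (intro eq_vecI) auto

lemma vsum_mult: assumes M: "M \<in> carrier_mat n n" shows
  "(\<And>l. l < j \<Longrightarrow> f l \<in> carrier_vec n) \<Longrightarrow> M *\<^sub>v vsum n j f = vsum n j (\<lambda>l. M *\<^sub>v f l)"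
proof (intro eq_vecI)
  fix i assume fc: "\<And>l. l < j \<Longrightarrow> f l \<in> carrier_vec n" and "i < dim_vec (vsum n j (\<lambda>l. M *\<^sub>v f l))"
  then have i: "i < n" by (simp add: vsum_def)
  have fd: "\<And>l. l < j \<Longrightarrow> dim_vec (f l) = n" using fc carrier_vecD by blast
  have "(M *\<^sub>v vsum n j f) $ i = (\<Sum>c<n. M $$ (i,c) * (\<Sum>l<j. f l $ c))"
    using M i by (simp add: vsum_def scalar_prod_def lessThan_atLeast0)
  also have "\<dots> = (\<Sum>l<j. \<Sum>c<n. M $$ (i,c) * f l $ c)"
    by (simp add: sum_distrib_left sum.swap[of _ "{..<n}"])
  also have "\<dots> = vsum n j (\<lambda>l. M *\<^sub>v f l) $ i"
    using M i fd by (auto simp: vsum_def scalar_prod_def lessThan_atLeast0 intro!: sum.cong)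
  finally show "(M *\<^sub>v vsum n j f) $ i = vsum n j (\<lambda>l. M *\<^sub>v f l) $ i" .
qed (use M in \<open>auto simp: vsum_def\<close>)

lemma Vc_Suc: assumes S: "is_system n A b c" and l: "l < j"
  shows "Vc n A b k (Suc j) l = A (k + int j) *\<^sub>v Vc n A b k j l"
proof -
  have e: "Suc j - l - 1 = Suc (j - l - 1)" using l by simp
  have e2: "k + int l + 1 + int (j - l - 1) = k + int j" using l by simp
  have "Vc n A b k (Suc j) l = (A (k + int j) * Phim n A (k + int l + 1) (j - l - 1)) *\<^sub>v col (b (k + int l)) 0"
    unfolding Vc_def e using e2 by simp
  also have "\<dots> = A (k + int j) *\<^sub>v Vc n A b k j l"
    unfolding Vc_def using S Phim_carrier[OF S] bc_carrier[OF S] unfolding is_system_def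
    by (metis assoc_mult_mat_vec)
  finally show ?thesis .
qed

lemma Vc_last: assumes S: "is_system n A b c"
  shows "Vc n A b k (Suc j) j = col (b (k + int j)) 0"
  unfolding Vc_def using bc_carrier[OF S] by (simp add: one_mult_mat_vec)

lemma state_carrier: assumes S: "is_system n A b c" and xs: "xs \<in> carrier_vec n"
  shows "state A b k xs u j \<in> carrier_vec n"
  by (induction j) (use xs S bc_carrier[OF S] in \<open>auto simp: is_system_def intro!: add_carrier_vec mult_mat_vec_carrier\<close>)

lemma state0: assumes S: "is_system n A b c"
  shows "state A b k (0\<^sub>v n) u j = vsum n j (\<lambda>l. u (k + int l) \<cdot>\<^sub>v Vc n A b k j l)"
proof (induction j)
  case 0
  then show ?case by (intro eq_vecI) (auto simp: vsum_def)
next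
  case (Suc j)
  have Ak: "A (k + int j) \<in> carrier_mat n n" using S unfolding is_system_def by auto
  have "state A b k (0\<^sub>v n) u (Suc j) = A (k + int j) *\<^sub>v vsum n j (\<lambda>l. u (k + int l) \<cdot>\<^sub>v Vc n A b k j l)
     + u (k + int j) \<cdot>\<^sub>v col (b (k + int j)) 0" using Suc by simp
  also have "A (k + int j) *\<^sub>v vsum n j (\<lambda>l. u (k + int l) \<cdot>\<^sub>v Vc n A b k j l)
     = vsum n j (\<lambda>l. u (k + int l) \<cdot>\<^sub>v Vc n A b k (Suc j) l)"
    apply (subst vsum_mult[OF Ak])
     apply (simp add: Vc_carrier[OF S])
    apply (rule vsum_cong)
    using Vc_Suc[OF S] Vc_carrier[OF S] Ak by (simp add: mult_mat_vec)
  also have "vsum n j (\<lambda>l. u (k + int l) \<cdot>\<^sub>v Vc n A b k (Suc j) l) + u (k + int j) \<cdot>\<^sub>v col (b (k + int j)) 0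
     = vsum n (Suc j) (\<lambda>l. u (k + int l) \<cdot>\<^sub>v Vc n A b k (Suc j) l)"
    using Vc_last[OF S] S
    by (intro eq_vecI) (auto simp: vsum_def)
  finally show ?case .
qed

lemma Rm_carrier: "Rm n A b k \<in> carrier_mat n n" unfolding Rm_def by simp

lemma Rm_dims[simp]: "dim_row (Rm n A b k) = n" "dim_col (Rm n A b k) = n" unfolding Rm_def by simp_all

lemma col_Rm: assumes S: "is_system n A b c" and l: "l < n"
  shows "col (Rm n A b k) l = Vc n A b k n l"
  using S l unfolding Rm_def by (intro eq_vecI) auto

lemma Rm_mult: assumes S: "is_system n A b c" and cv: "cv \<in> carrier_vec n"
  shows "Rm n A b k *\<^sub>v cv = vsum n n (\<lambda>l. cv $ l \<cdot>\<^sub>v Vc n A b k n l)"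
proof (rule eq_vecI)
  fix i assume "i < dim_vec (vsum n n (\<lambda>l. cv $ l \<cdot>\<^sub>v Vc n A b k n l))"
  then have i: "i < n" using vsum_carrier by (metis carrier_vecD)
  show "(Rm n A b k *\<^sub>v cv) $ i = vsum n n (\<lambda>l. cv $ l \<cdot>\<^sub>v Vc n A b k n l) $ i"
    using i cv S unfolding Rm_def
    by (subst vsum_index) (auto simp: scalar_prod_def mult.commute carrier_vecD lessThan_atLeast0 intro!: sum.cong)
qed (auto simp: Rm_def vsum_def)


lemma ent3: assumes X: "X \<in> carrier_mat m n" and Y: "Y \<in> carrier_mat n n" and Z: "Z \<in> carrier_mat n p"
  and l: "l < p" and m: "0 < m"
  shows "(X * Y * Z) $$ (0, l) = (X *\<^sub>v (Y *\<^sub>v col Z l)) $ 0"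
proof -
  define XY where "XY = X * Y"
  have XY: "XY \<in> carrier_mat m n" using X Y unfolding XY_def by simp
  have "(X * Y * Z) $$ (0, l) = ((X * Y) *\<^sub>v col Z l) $ 0" unfolding XY_def[symmetric]
    using XY Z l m by simp
  also have "\<dots> = (X *\<^sub>v (Y *\<^sub>v col Z l)) $ 0" using X Y Z by (simp add: carrier_vecI)
  finally show ?thesis .
qed

lemma ent_inv: assumes X: "X \<in> carrier_mat n n" and R: "R \<in> carrier_mat n n" and XR: "X * R = 1\<^sub>m n"
  and l: "l < n" and i: "i < n"
  shows "(X *\<^sub>v col R l) $ i = (if i = l then 1 else 0)"
proof -
  have "(X *\<^sub>v col R l) $ i = (X * R) $$ (i, l)" using X R l i by simp
  then show ?thesis using XR l i by simp
qed

lemma ctrl_R_inv: assumes S: "is_system n A b c" and C: "completely_controllable n A b"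
  shows "\<exists>Ri \<in> carrier_mat n n. Rm n A b k * Ri = 1\<^sub>m n \<and> Ri * Rm n A b k = 1\<^sub>m n"
proof -
  have "\<forall>i. \<exists>u. i < n \<longrightarrow> state A b k (0\<^sub>v n) u n = unit_vec n i"
    using C unfolding completely_controllable_def by auto
  then obtain uf where uf: "\<And>i. i < n \<Longrightarrow> state A b k (0\<^sub>v n) (uf i) n = unit_vec n i"
    by metis
  define U where "U = mat n n (\<lambda>(l,i). uf i (k + int l))"
  have U: "U \<in> carrier_mat n n" unfolding U_def by simp
  have RU: "Rm n A b k * U = 1\<^sub>m n"
  proof (rule eq_matI)
    fix a i assume a: "a < dim_row (1\<^sub>m n :: real mat)" and i: "i < dim_col (1\<^sub>m n :: real mat)"
    then have a: "a < n" and i: "i < n" by auto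
    have cU: "col U i = vec n (\<lambda>l. uf i (k + int l))" using i unfolding U_def by (intro eq_vecI) auto
    have "(Rm n A b k * U) $$ (a, i) = (Rm n A b k *\<^sub>v col U i) $ a"
      using a i U Rm_carrier by simp
    also have "Rm n A b k *\<^sub>v col U i = vsum n n (\<lambda>l. uf i (k + int l) \<cdot>\<^sub>v Vc n A b k n l)"
      unfolding cU by (subst Rm_mult[OF S]) (auto intro!: vsum_cong)
    also have "\<dots> = unit_vec n i" using state0[OF S, symmetric] uf[OF i] by simp
    finally show "(Rm n A b k * U) $$ (a, i) = 1\<^sub>m n $$ (a, i)" using a i by simp
  qed (use U in auto)
  moreover have "U * Rm n A b k = 1\<^sub>m n" using mat_mult_left_right_inverse[OF Rm_carrier U RU] .
  ultimately show ?thesis using U by blast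
qed

definition Tm :: "nat \<Rightarrow> (int \<Rightarrow> real mat) \<Rightarrow> (int \<Rightarrow> real mat) \<Rightarrow> int \<Rightarrow> real mat" where
  "Tm n A Ri k = mat n n (\<lambda>(j,c). (Ri (k + int j - int n) * Phim n A k j) $$ (0, c))"

lemma Tm_carrier: "Tm n A Ri k \<in> carrier_mat n n" unfolding Tm_def by simp

lemma Tm_dims[simp]: "dim_row (Tm n A Ri k) = n" "dim_col (Tm n A Ri k) = n" unfolding Tm_def by simp_all

context
  fixes n A b c Ri
  assumes S: "is_system n A b c"
  and Ri: "\<And>m. Ri m \<in> carrier_mat n n" "\<And>m. Ri m * Rm n A b m = 1\<^sub>m n"
begin

lemma rowT: assumes j: "j < n" and X: "X \<in> carrier_mat n p" and cc: "cc < p"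
  shows "(Tm n A Ri k * X) $$ (j, cc) = (Ri (k + int j - int n) * Phim n A k j * X) $$ (0, cc)"
proof -
  have P: "Phim n A k j \<in> carrier_mat n n" using Phim_carrier[OF S] .
  have R: "Ri (k + int j - int n) \<in> carrier_mat n n" using Ri by simp
  define RP where "RP = Ri (k + int j - int n) * Phim n A k j"
  have RPc: "RP \<in> carrier_mat n n" using P R unfolding RP_def by simp
  have "(Tm n A Ri k * X) $$ (j, cc) = (\<Sum>t<n. Tm n A Ri k $$ (j,t) * X $$ (t,cc))"
    using j X cc Tm_carrier by (simp add: scalar_prod_def lessThan_atLeast0)
  also have "\<dots> = (\<Sum>t<n. RP $$ (0,t) * X $$ (t,cc))"
    using j by (simp add: Tm_def RP_def)
  also have "\<dots> = (RP * X) $$ (0, cc)"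
    using j X cc RPc by (simp add: scalar_prod_def lessThan_atLeast0)
  also have "\<dots> = (Ri (k + int j - int n) * Phim n A k j * X) $$ (0, cc)" unfolding RP_def ..
  finally show ?thesis .
qed

lemma Vc_at: assumes i: "i < n"
  shows "Vc n A b (k + 1 + int i - int n) n (n - 1 - i) = Phim n A (k + 1) i *\<^sub>v col (b k) 0"
proof -
  have e1: "k + 1 + int i - int n + int (n - 1 - i) + 1 = k + 1" using i by simp
  have e2: "k + 1 + int i - int n + int (n - 1 - i) = k" using i by simp
  have e3: "n - (n - 1 - i) - 1 = i" using i by simp
  show ?thesis unfolding Vc_def e1 e2 e3 ..
qed

lemma Tb: assumes i: "i < n"
  shows "(Tm n A Ri (k + 1) * b k) $$ (i, 0) = (if i = n - 1 then 1 else 0)"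
proof -
  let ?k' = "k + 1 + int i - int n"
  have bk: "b k \<in> carrier_mat n 1" using S unfolding is_system_def by auto
  have "(Tm n A Ri (k + 1) * b k) $$ (i, 0) = (Ri ?k' * Phim n A (k+1) i * b k) $$ (0, 0)"
    using rowT[OF i bk] by simp
  also have "\<dots> = (Ri ?k' *\<^sub>v (Phim n A (k+1) i *\<^sub>v col (b k) 0)) $ 0"
    using ent3[OF Ri(1) Phim_carrier[OF S] bk] i by simp
  also have "\<dots> = (Ri ?k' *\<^sub>v col (Rm n A b ?k') (n - 1 - i)) $ 0"
    using Vc_at[OF i] col_Rm[OF S, of "n - 1 - i"] i by simp
  also have "\<dots> = (if 0 = n - 1 - i then 1 else 0)"
    using ent_inv[OF Ri(1) Rm_carrier Ri(2)] i by simp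
  finally show ?thesis using i by auto
qed

lemma TA: assumes i: "Suc i < n" and j: "j < n" and Ti: "Ti \<in> carrier_mat n n"
  and TT: "Tm n A Ri k * Ti = 1\<^sub>m n"
  shows "(Tm n A Ri (k + 1) * A k * Ti) $$ (i, j) = (if j = i + 1 then 1 else 0)"
proof -
  let ?k' = "k + 1 + int i - int n"
  have Ak: "A k \<in> carrier_mat n n" using S unfolding is_system_def by auto
  have P: "\<And>k j. Phim n A k j \<in> carrier_mat n n" using Phim_carrier[OF S] .
  have "(Tm n A Ri (k + 1) * A k * Ti) = Tm n A Ri (k + 1) * (A k * Ti)"
    using Ak Ti Tm_carrier by (metis assoc_mult_mat)
  then have "(Tm n A Ri (k + 1) * A k * Ti) $$ (i, j) = (Ri ?k' * Phim n A (k+1) i * (A k * Ti)) $$ (0, j)"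
    using rowT[of i "A k * Ti" n j "k + 1"] i j Ak Ti by simp
  also have "Ri ?k' * Phim n A (k+1) i * (A k * Ti) = Ri ?k' * (Phim n A (k+1) i * A k) * Ti"
    using Ri(1)[of ?k'] P[of "k+1" i] Ak Ti by (simp add: assoc_mult_mat[of _ n n _ n _ n])
  also have "\<dots> = Ri (k + int (Suc i) - int n) * Phim n A k (Suc i) * Ti"
    using Phim_Suc'[OF S] by (simp add: add.commute add.left_commute)
  also have "(\<dots>) $$ (0, j) = (Tm n A Ri k * Ti) $$ (Suc i, j)"
    using rowT[of "Suc i" Ti n j k] i j Ti by simp
  also have "\<dots> = (if j = i + 1 then 1 else 0)" using TT i j by auto
  finally show ?thesis .
qed

lemma Vc_shift: assumes jl: "j \<le> l" and l: "l < n"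
  shows "Phim n A k j *\<^sub>v Vc n A b (k - int n) n l = Vc n A b (k + int j - int n) n (l - j)"
proof -
  let ?a = "k - int n + int l + 1" and ?p = "n - l - 1"
  have ap: "?a + int ?p = k" using l by simp
  have "Phim n A k j *\<^sub>v Vc n A b (k - int n) n l
      = (Phim n A k j * Phim n A ?a ?p) *\<^sub>v col (b (k - int n + int l)) 0"
    unfolding Vc_def using Phim_carrier[OF S] bc_carrier[OF S] by (metis assoc_mult_mat_vec)
  also have "Phim n A k j * Phim n A ?a ?p = Phim n A ?a (?p + j)"
    using Phim_split[OF S, of ?a ?p j] ap by simp
  also have "Phim n A ?a (?p + j) *\<^sub>v col (b (k - int n + int l)) 0 = Vc n A b (k + int j - int n) n (l - j)"
  proof -
    have e1: "k + int j - int n + int (l - j) + 1 = ?a" using jl by simp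
    have e2: "n - (l - j) - 1 = ?p + j" using jl l by simp
    have e3: "k + int j - int n + int (l - j) = k - int n + int l" using jl by simp
    show ?thesis unfolding Vc_def e1 e2 e3 ..
  qed
  finally show ?thesis .
qed

lemma TR: assumes j: "j < n" and l: "l < n" and jl: "j \<le> l"
  shows "(Tm n A Ri k * Rm n A b (k - int n)) $$ (j, l) = (if j = l then 1 else 0)"
proof -
  let ?kj = "k + int j - int n"
  have "(Tm n A Ri k * Rm n A b (k - int n)) $$ (j, l) = (Ri ?kj * Phim n A k j * Rm n A b (k - int n)) $$ (0, l)"
    using rowT[OF j Rm_carrier l] .
  also have "\<dots> = (Ri ?kj *\<^sub>v (Phim n A k j *\<^sub>v col (Rm n A b (k - int n)) l)) $ 0"
    using ent3[OF Ri(1) Phim_carrier[OF S] Rm_carrier l] j by simp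
  also have "\<dots> = (Ri ?kj *\<^sub>v col (Rm n A b ?kj) (l - j)) $ 0"
    using col_Rm[OF S l] col_Rm[OF S, of "l - j"] l Vc_shift[OF jl l] by simp
  also have "\<dots> = (if 0 = l - j then 1 else 0)"
    using ent_inv[OF Ri(1) Rm_carrier Ri(2)] l j by simp
  finally show ?thesis using jl by auto
qed

lemma T_inv: "\<exists>Ti \<in> carrier_mat n n. Tm n A Ri k * Ti = 1\<^sub>m n \<and> Ti * Tm n A Ri k = 1\<^sub>m n"
proof -
  define L where "L = Tm n A Ri k * Rm n A b (k - int n)"
  have Lc: "L \<in> carrier_mat n n" unfolding L_def using Tm_carrier Rm_carrier by (metis mult_carrier_mat)
  have ut: "upper_triangular (transpose_mat L)"
    unfolding upper_triangular_def using Lc TR unfolding L_def by auto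
  have "det L = det (transpose_mat L)" using det_transpose[OF Lc] by simp
  also have "\<dots> = prod_list (diag_mat (transpose_mat L))"
    using det_upper_triangular[OF ut] Lc by simp
  also have "diag_mat (transpose_mat L) = map (\<lambda>i. 1) [0..<n]"
    unfolding diag_mat_def using Lc TR unfolding L_def by auto
  also have "prod_list (map (\<lambda>i. 1::real) [0..<n]) = 1" by (induction n) auto
  finally have "det L = 1" .
  then have "det (Tm n A Ri k) \<noteq> 0" unfolding L_def using det_mult[OF Tm_carrier Rm_carrier] by auto
  from det_non_zero_imp_unit[OF Tm_carrier this, of "()"]
  show ?thesis unfolding Units_def ring_mat_def by auto
qed

end




lemma state_local: "(\<And>t. t < j \<Longrightarrow> u (k + int t) = u' (k + int t)) \<Longrightarrow> state A b k xs u j = state A b k xs u' j"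
  by (induction j) auto

lemma col_mult0: "M \<in> carrier_mat n m \<Longrightarrow> N \<in> carrier_mat m 1 \<Longrightarrow> col (M * N) 0 = M *\<^sub>v col N 0"
  by (intro eq_vecI) auto

lemma state_transfer:
  assumes S: "is_system n A b c"
  and T: "\<And>k. T k \<in> carrier_mat n n" "\<And>k. Ti k \<in> carrier_mat n n" "\<And>k. Ti k * T k = 1\<^sub>m n"
  and A': "\<And>k. A' k = T (k + 1) * A k * Ti k" and b': "\<And>k. b' k = T (k + 1) * b k"
  and xs: "xs \<in> carrier_vec n"
  shows "T (k + int j) *\<^sub>v state A b k xs u j = state A' b' k (T k *\<^sub>v xs) u j"
proof (induction j)
  case 0
  then show ?case by simp
next
  case (Suc j)
  let ?m = "k + int j"
  have Am: "A ?m \<in> carrier_mat n n" and bm: "b ?m \<in> carrier_mat n 1" using S unfolding is_system_def by auto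
  have x: "state A b k xs u j \<in> carrier_vec n" using state_carrier[OF S xs] .
  have e: "k + int (Suc j) = ?m + 1" by simp
  have "T (k + int (Suc j)) *\<^sub>v state A b k xs u (Suc j)
     = T (?m + 1) *\<^sub>v (A ?m *\<^sub>v state A b k xs u j) + u ?m \<cdot>\<^sub>v (T (?m + 1) *\<^sub>v col (b ?m) 0)"
    unfolding e using T(1)[of "?m+1"] Am x bc_carrier[OF S, of ?m]
    by (simp add: mult_add_distrib_mat_vec mult_mat_vec)
  also have "T (?m + 1) *\<^sub>v (A ?m *\<^sub>v state A b k xs u j) = A' ?m *\<^sub>v (T ?m *\<^sub>v state A b k xs u j)"
  proof -
    have "A' ?m *\<^sub>v (T ?m *\<^sub>v state A b k xs u j) = (T (?m+1) * A ?m * Ti ?m * T ?m) *\<^sub>v state A b k xs u j"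
    proof -
      have c1: "T (?m+1) * A ?m * Ti ?m \<in> carrier_mat n n"
        using T(1)[of "?m+1"] T(2)[of ?m] Am by (intro mult_carrier_mat)
      show ?thesis unfolding A' by (rule assoc_mult_mat_vec[OF c1 T(1) x, symmetric])
    qed
    also have "T (?m+1) * A ?m * Ti ?m * T ?m = T (?m+1) * A ?m"
    proof -
      have c1: "T (?m+1) * A ?m \<in> carrier_mat n n"
        using T(1)[of "?m+1"] Am by (intro mult_carrier_mat)
      have "T (?m+1) * A ?m * Ti ?m * T ?m = T (?m+1) * A ?m * (Ti ?m * T ?m)"
        by (rule assoc_mult_mat[OF c1 T(2) T(1)])
      also have "\<dots> = T (?m+1) * A ?m" unfolding T(3) using c1 by (rule right_mult_one_mat)
      finally show ?thesis .
    qed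
    finally show ?thesis using T(1)[of "?m+1"] Am x by simp
  qed
  also have "T (?m + 1) *\<^sub>v col (b ?m) 0 = col (b' ?m) 0"
    unfolding b' using col_mult0[OF T(1) bm] by simp
  finally show ?case using Suc by simp
qed

lemma ctrl_transfer:
  assumes S: "is_system n A b c"
  and T: "\<And>k. T k \<in> carrier_mat n n" "\<And>k. Ti k \<in> carrier_mat n n" "\<And>k. Ti k * T k = 1\<^sub>m n"
  and A': "\<And>k. A' k = T (k + 1) * A k * Ti k" and b': "\<And>k. b' k = T (k + 1) * b k"
  and C: "completely_controllable n A' b'"
  shows "completely_controllable n A b"
  unfolding completely_controllable_def
proof (intro allI ballI)
  fix k and xs xf :: "real vec" assume xs: "xs \<in> carrier_vec n" and xf: "xf \<in> carrier_vec n"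
  have "T k *\<^sub>v xs \<in> carrier_vec n" "T (k + int n) *\<^sub>v xf \<in> carrier_vec n" using T(1) xs xf by (metis mult_mat_vec_carrier)+
  then obtain u where u: "state A' b' k (T k *\<^sub>v xs) u n = T (k + int n) *\<^sub>v xf"
    using C unfolding completely_controllable_def by blast
  have "T (k + int n) *\<^sub>v state A b k xs u n = T (k + int n) *\<^sub>v xf"
    using state_transfer[OF S T A' b' xs] u by simp
  then have TT: "Ti (k + int n) *\<^sub>v (T (k + int n) *\<^sub>v state A b k xs u n) = Ti (k + int n) *\<^sub>v (T (k + int n) *\<^sub>v xf)"
    by simp
  show "\<exists>u. state A b k xs u n = xf"
  proof -
    have "\<And>v. v \<in> carrier_vec n \<Longrightarrow> Ti (k + int n) *\<^sub>v (T (k + int n) *\<^sub>v v) = v"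
      using T(1)[of "k + int n"] T(2)[of "k + int n"] T(3)[of "k + int n"]
      by (simp add: assoc_mult_mat_vec[symmetric])
    then show ?thesis using xf state_carrier[OF S xs] TT by metis
  qed
qed

lemma canon_ctrl:
  assumes S: "is_system n A b c" and CF: "controller_canonical n A b"
  shows "completely_controllable n A b"
  unfolding completely_controllable_def
proof (intro allI ballI)
  fix k and xs w :: "real vec" assume xs: "xs \<in> carrier_vec n" and w: "w \<in> carrier_vec n"
  have main: "j \<le> n \<Longrightarrow> \<exists>u. \<forall>i<n. state A b k xs u j $ i = (if i + j < n then xs $ (i + j) else w $ (i + j - n))" for j
  proof (induction j)
    case 0
    then show ?case by simp
  next
    case (Suc j)
    then obtain u where u: "\<forall>i<n. state A b k xs u j $ i = (if i + j < n then xs $ (i + j) else w $ (i + j - n))"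
      by auto
    let ?m = "k + int j"
    let ?x = "state A b k xs u j"
    have x: "?x \<in> carrier_vec n" using state_carrier[OF S xs] .
    define val where "val = w $ j - row (A ?m) (n - 1) \<bullet> ?x"
    define u' where "u' = u(?m := val)"
    have same: "state A b k xs u' j = ?x" by (rule state_local) (auto simp: u'_def)
    have st: "state A b k xs u' (Suc j) = A ?m *\<^sub>v ?x + val \<cdot>\<^sub>v col (b ?m) 0"
      using same by (simp add: u'_def)
    have Am: "A ?m \<in> carrier_mat n n" using S unfolding is_system_def by auto
    have bm: "b ?m \<in> carrier_mat n 1" using S unfolding is_system_def by auto
    show ?case
    proof (intro exI allI impI)
      fix i assume i: "i < n"
      have e: "state A b k xs u' (Suc j) $ i = row (A ?m) i \<bullet> ?x + val * b ?m $$ (i, 0)"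
        unfolding st using i Am bm x by simp
      show "state A b k xs u' (Suc j) $ i = (if i + Suc j < n then xs $ (i + Suc j) else w $ (i + Suc j - n))"
      proof (cases "i = n - 1")
        case True
        then have "b ?m $$ (i, 0) = 1" using CF i unfolding controller_canonical_def by auto
        then show ?thesis using e True i Suc.prems unfolding val_def by auto
      next
        case False
        then have i1: "i < n - 1" using i by simp
        have b0: "b ?m $$ (i, 0) = 0" using CF i False unfolding controller_canonical_def by auto
        have "row (A ?m) i \<bullet> ?x = (\<Sum>t\<in>{0..<n}. (if t = i + 1 then 1 else 0) * ?x $ t)"
          unfolding scalar_prod_def using CF i1 Am x unfolding controller_canonical_def by (auto intro!: sum.cong)
        also have "\<dots> = (\<Sum>t\<in>{0..<n}. (if t = i + 1 then ?x $ t else 0))" by (intro sum.cong) auto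
        also have "\<dots> = ?x $ (i + 1)" using i1 by simp
        finally show ?thesis using e b0 u i1 by (auto simp: add.commute add.left_commute)
      qed
    qed
  qed
  obtain u where u: "\<forall>i<n. state A b k xs u n $ i = (if i + n < n then xs $ (i + n) else w $ (i + n - n))"
    using main[of n] by auto
  have "state A b k xs u n = w"
    using u state_carrier[OF S xs] w by (intro eq_vecI) auto
  then show "\<exists>u. state A b k xs u n = w" by blast
qed



theorem theorem2:
  fixes n :: nat and A b c :: "int \<Rightarrow> real mat"
  assumes "is_system n A b c"
  shows "completely_controllable n A b \<longleftrightarrow>
    (\<exists>A' b' c'. is_system n A' b' c' \<and> alg_equivalent n A b c A' b' c' \<and>
                controller_canonical n A' b')"
proof
  assume C: "completely_controllable n A b"
  note S = assms
  have "\<forall>m. \<exists>R. R \<in> carrier_mat n n \<and> Rm n A b m * R = 1\<^sub>m n \<and> R * Rm n A b m = 1\<^sub>m n"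
    using ctrl_R_inv[OF S C] by blast
  then obtain Ri where "\<forall>m. Ri m \<in> carrier_mat n n \<and> Rm n A b m * Ri m = 1\<^sub>m n \<and> Ri m * Rm n A b m = 1\<^sub>m n"
    by (rule choice[THEN exE])
  then have Ri: "\<And>m. Ri m \<in> carrier_mat n n" "\<And>m. Ri m * Rm n A b m = 1\<^sub>m n" by auto
  let ?T = "Tm n A Ri"
  have "\<forall>k. \<exists>X. X \<in> carrier_mat n n \<and> ?T k * X = 1\<^sub>m n \<and> X * ?T k = 1\<^sub>m n"
    using T_inv[OF S Ri] by blast
  then obtain Ti where "\<forall>k. Ti k \<in> carrier_mat n n \<and> ?T k * Ti k = 1\<^sub>m n \<and> Ti k * ?T k = 1\<^sub>m n"
    by (rule choice[THEN exE])
  then have Ti: "\<And>k. Ti k \<in> carrier_mat n n" "\<And>k. ?T k * Ti k = 1\<^sub>m n" "\<And>k. Ti k * ?T k = 1\<^sub>m n" by auto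
  define A' where "A' k = ?T (k + 1) * A k * Ti k" for k
  define b' where "b' k = ?T (k + 1) * b k" for k
  define c' where "c' k = c k * Ti k" for k
  have sys: "is_system n A' b' c'"
    unfolding is_system_def A'_def b'_def c'_def
  proof
    fix k
    have "A k \<in> carrier_mat n n" "b k \<in> carrier_mat n 1" "c k \<in> carrier_mat 1 n"
      using S unfolding is_system_def by auto
    then show "?T (k + 1) * A k * Ti k \<in> carrier_mat n n \<and> ?T (k + 1) * b k \<in> carrier_mat n 1 \<and>
          c k * Ti k \<in> carrier_mat 1 n"
      using Tm_carrier Ti(1) by (meson mult_carrier_mat)
  qed
  have eq: "alg_equivalent n A b c A' b' c'"
    unfolding alg_equivalent_def A'_def b'_def c'_def
    by (rule exI[of _ ?T], rule exI[of _ Ti]) (use Tm_carrier Ti in auto)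
  have cf: "controller_canonical n A' b'"
    unfolding controller_canonical_def
  proof (intro allI conjI impI)
    fix k i assume i: "i < n"
    show "b' k $$ (i, 0) = (if i = n - 1 then 1 else 0)"
      unfolding b'_def using Tb[OF S Ri i] .
  next
    fix k i j assume i: "i < n - 1" and j: "j < n"
    show "A' k $$ (i, j) = (if j = i + 1 then 1 else 0)"
      unfolding A'_def using TA[OF S Ri _ j Ti(1) Ti(2)] i by simp
  qed
  show "\<exists>A' b' c'. is_system n A' b' c' \<and> alg_equivalent n A b c A' b' c' \<and> controller_canonical n A' b'"
    using sys eq cf by blast
next
  assume "\<exists>A' b' c'. is_system n A' b' c' \<and> alg_equivalent n A b c A' b' c' \<and> controller_canonical n A' b'"
  then obtain A' b' c' where sys: "is_system n A' b' c'" and eq: "alg_equivalent n A b c A' b' c'"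
    and cf: "controller_canonical n A' b'" by blast
  from eq obtain T Ti where T: "\<And>k. T k \<in> carrier_mat n n" "\<And>k. Ti k \<in> carrier_mat n n"
    "\<And>k. Ti k * T k = 1\<^sub>m n" "\<And>k. A' k = T (k + 1) * A k * Ti k" "\<And>k. b' k = T (k + 1) * b k"
    unfolding alg_equivalent_def by auto
  show "completely_controllable n A b"
    using ctrl_transfer[OF assms T canon_ctrl[OF sys cf]] .
qed

end
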